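(* If $v_1$ and $v_2$ are submodular valuations on a finite set $X$ with disjoint supports (i.e., $v_i(\{x\})>0$ implies $v_j(\{x\})=0$ for $\{i,j\}=\{1,2\}$), then $v_1\vee v_2$ is submodular.
   Context: A valuation on a finite set $X$ is a function $v:2^X\to\mathbb{R}_{\ge 0}$ with $v(\emptyset)=0$ and monotone under inclusion; it is submodular if $v(A)+v(B)\ge v(A\cup B)+v(A\cap B)$ for all $A,B\subseteq X$. $(v_1\vee v_2)(S)=\max_{T\subseteq S}(v_1(T)+v_2(S\setminus T))$. *)

theory Defs
  imports Main "HOL-Library.Extended_Real"
begin

definition valuation :: "'a set \<Rightarrow> ('a set \<Rightarrow> real) \<Rightarrow> bool" where
  "valuation X v \<longleftrightarrow> v {} = 0 \<and> (\<forall>A. A \<subseteq> X \<longrightarrow> v A \<ge> 0) \<and>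
     (\<forall>A B. A \<subseteq> B \<and> B \<subseteq> X \<longrightarrow> v A \<le> v B)"

definition submodular :: "'a set \<Rightarrow> ('a set \<Rightarrow> real) \<Rightarrow> bool" where
  "submodular X v \<longleftrightarrow> (\<forall>A B. A \<subseteq> X \<and> B \<subseteq> X \<longrightarrow> v A + v B \<ge> v (A \<union> B) + v (A \<inter> B))"

definition join :: "('a set \<Rightarrow> real) \<Rightarrow> ('a set \<Rightarrow> real) \<Rightarrow> 'a set \<Rightarrow> real" where
  "join v1 v2 S = Max ((\<lambda>T. v1 T + v2 (S - T)) ` Pow S)"

end

theory Submission
  imports Defs
begin

lemma null_add:
  assumes val: "valuation X v" and sm: "submodular X v"
    and fin: "finite N" and NX: "N \<subseteq> X" and AX: "A \<subseteq> X"
    and z: "\<forall>x\<in>N. v {x} = 0"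
  shows "v (A \<union> N) = v A"
  using fin NX z
proof (induction N rule: finite_induct)
  case empty
  then show ?case by simp
next
  case (insert x N)
  have IH: "v (A \<union> N) = v A" using insert by auto
  have xX: "x \<in> X" and NX': "A \<union> N \<subseteq> X" using insert AX by auto
  have vx: "v {x} = 0" using insert by auto
  show ?case
  proof (cases "x \<in> A \<union> N")
    case True
    then have "A \<union> insert x N = A \<union> N" by auto
    then show ?thesis using IH by simp
  next
    case False
    then have i: "(A \<union> N) \<inter> {x} = {}" by auto
    have "v (A \<union> N) + v {x} \<ge> v ((A \<union> N) \<union> {x}) + v ((A \<union> N) \<inter> {x})"
      using sm NX' xX unfolding submodular_def by (metis empty_subsetI insert_subset)
    moreover have "v {} = 0" using val unfolding valuation_def by auto
    moreover have "v (A \<union> N) \<le> v ((A \<union> N) \<union> {x})"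
      using val NX' xX unfolding valuation_def by (metis Un_upper1 insert_subset sup.boundedI empty_subsetI)
    moreover have "A \<union> insert x N = (A \<union> N) \<union> {x}" by auto
    ultimately show ?thesis using IH vx i by simp
  qed
qed

lemma null_sub:
  assumes val: "valuation X v" and sm: "submodular X v" and fX: "finite X"
    and SX: "S \<subseteq> X" and TS: "T \<subseteq> S"
    and z: "\<forall>x\<in>S - T. v {x} = 0"
  shows "v S = v T"
proof -
  have "v (T \<union> (S - T)) = v T"
    by (rule null_add[OF val sm]) (use fX SX TS z in \<open>auto intro: finite_subset[of _ X]\<close>)
  moreover have "T \<union> (S - T) = S" using TS by auto
  ultimately show ?thesis by simp
qed

theorem proposition4:
  fixes X :: "'a set" and v1 v2 :: "'a set \<Rightarrow> real"
  assumes "finite X"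
    and "valuation X v1" and "valuation X v2"
    and "submodular X v1" and "submodular X v2"
    and "\<forall>x\<in>X. v1 {x} > 0 \<longrightarrow> v2 {x} = 0"
    and "\<forall>x\<in>X. v2 {x} > 0 \<longrightarrow> v1 {x} = 0"
  shows "submodular X (join v1 v2)"
proof -
  have key: "join v1 v2 S = v1 S + v2 S" if SX: "S \<subseteq> X" for S
  proof -
    have fS: "finite S" using SX assms(1) finite_subset by auto
    let ?F = "(\<lambda>T. v1 T + v2 (S - T)) ` Pow S"
    have fin: "finite ?F" using fS by auto
    have ub: "\<forall>y\<in>?F. y \<le> v1 S + v2 S"
    proof
      fix y assume "y \<in> ?F"
      then obtain T where T: "T \<subseteq> S" "y = v1 T + v2 (S - T)" by auto
      have "v1 T \<le> v1 S" using assms(2) T SX unfolding valuation_def by auto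
      moreover have "v2 (S - T) \<le> v2 S" using assms(3) SX unfolding valuation_def by auto
      ultimately show "y \<le> v1 S + v2 S" using T by simp
    qed
    define T where "T = {x\<in>S. v1 {x} > 0}"
    have TS: "T \<subseteq> S" unfolding T_def by auto
    have e1: "v1 S = v1 T"
    proof (rule null_sub[OF assms(2,4,1) SX TS], intro ballI)
      fix x assume "x \<in> S - T"
      moreover have "v1 {x} \<ge> 0" using assms(2) SX \<open>x \<in> S - T\<close> unfolding valuation_def by auto
      ultimately show "v1 {x} = 0" unfolding T_def by auto
    qed
    have e2: "v2 S = v2 (S - T)"
    proof (rule null_sub[OF assms(3,5,1) SX], blast, intro ballI)
      fix x assume "x \<in> S - (S - T)"
      then show "v2 {x} = 0" using assms(6) SX unfolding T_def by auto
    qed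
    have mem: "v1 S + v2 S \<in> ?F" using e1 e2 TS by auto
    have "Max ?F = v1 S + v2 S"
      using fin mem ub by (intro Max_eqI) auto
    then show ?thesis unfolding join_def by simp
  qed
  show ?thesis unfolding submodular_def
  proof (intro allI impI)
    fix A B assume AB: "A \<subseteq> X \<and> B \<subseteq> X"
    have "v1 A + v1 B \<ge> v1 (A \<union> B) + v1 (A \<inter> B)" using assms(4) AB unfolding submodular_def by auto
    moreover have "v2 A + v2 B \<ge> v2 (A \<union> B) + v2 (A \<inter> B)" using assms(5) AB unfolding submodular_def by auto
    moreover have "A \<union> B \<subseteq> X" "A \<inter> B \<subseteq> X" using AB by auto
    ultimately show "join v1 v2 A + join v1 v2 B \<ge> join v1 v2 (A \<union> B) + join v1 v2 (A \<inter> B)"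
      using key AB by simp
  qed
qed

end
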